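(* For $r\ge2$ and $n\ge1$, the base-$r$ $n$-simplex has local $h^\ast$-polynomial \[ \ell^\ast(\mathcal{B}_{(r,n)};z)=z\sum_{i=0}^{r-2}f^{\langle r-1,i\rangle}_{(r,n-1)}+z\sum_{\ell=1}^{r-2}\left(\sum_{i=0}^{\ell-1}f^{\langle r-1,i\rangle}_{(r,n-1)}+z\sum_{i=\ell}^{r-2}f^{\langle r-1,i\rangle}_{(r,n-1)}\right). \]
   Context: For $r\ge2$, $n\ge1$, $\mathcal{B}_{(r,n)}:=\operatorname{conv}\bigl(e^{(1)},\ldots,e^{(n)},-\sum_{i=1}^n(r-1)r^{i-1}e^{(i)}\bigr)\subset\mathbb{R}^n$. For $m\ge0$ let $f_{(r,m)}(z):=(1+z+\cdots+z^{r-1})^m$ (so $f_{(r,0)}=1$). Every polynomial $f(z)\in\mathbb{R}[z]$ can be written uniquely as $f(z)=\sum_{\ell=0}^{r-2}z^\ell f^{(\ell)}(z^{r-1})$ with $f^{(\ell)}\in\mathbb{R}[z]$; set $f^{\langle r-1,\ell\rangle}:=f^{(\ell)}$ for $0\le\ell\le r-2$. For a lattice simplex $\Delta=\operatorname{conv}(v^{(0)},\ldots,v^{(d)})\subset\mathbb{R}^n$, $\ell^\ast(\Delta;z):=\sum_{x\in\Pi^\circ_\Delta\cap\mathbb{Z}^{n+1}}z^{x_{n+1}}$, where $\Pi^\circ_\Delta:=\{\sum_{i=0}^d\lambda_i(v^{(i)},1):0<\lambda_i<1\}$. *)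

theory Defs
  imports "HOL-Computational_Algebra.Polynomial"
begin

text \<open>Points of \<open>\<real>^N\<close> / \<open>\<int>^N\<close> are functions \<open>nat \<Rightarrow> _\<close> on the coordinates \<open>0..<N\<close>.
  A lattice simplex in \<open>\<real>^n\<close> with vertices \<open>v 0, \<dots>, v d\<close> (each \<open>v i :: nat \<Rightarrow> int\<close>,
  coordinates \<open>0..<n\<close>).  The lifted point \<open>(v i, 1)\<close> lives in \<open>\<real>^(n+1)\<close>, its extra
  (last) coordinate being coordinate \<open>n\<close>.\<close>

definition open_pp_lattice_points :: "nat \<Rightarrow> nat \<Rightarrow> (nat \<Rightarrow> nat \<Rightarrow> int) \<Rightarrow> (nat \<Rightarrow> int) set" where
  "open_pp_lattice_points n d v =
     {x. (\<forall>j>n. x j = 0) \<and>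
         (\<exists>c::nat \<Rightarrow> real. (\<forall>i\<le>d. 0 < c i \<and> c i < 1) \<and>
            (\<forall>j<n. real_of_int (x j) = (\<Sum>i\<le>d. c i * real_of_int (v i j))) \<and>
            real_of_int (x n) = (\<Sum>i\<le>d. c i))}"

definition local_hstar :: "nat \<Rightarrow> nat \<Rightarrow> (nat \<Rightarrow> nat \<Rightarrow> int) \<Rightarrow> real poly" where
  "local_hstar n d v = (\<Sum>x\<in>open_pp_lattice_points n d v. monom 1 (nat (x n)))"

text \<open>Vertices of the base-r n-simplex: \<open>e^(i+1)\<close> for \<open>i<n\<close> and the last vertex
  \<open>-\<Sum>_(i=1..n) (r-1) r^(i-1) e^(i)\<close> (0-indexed coordinates).\<close>
definition base_vertices :: "nat \<Rightarrow> nat \<Rightarrow> nat \<Rightarrow> nat \<Rightarrow> int" where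
  "base_vertices r n i j =
     (if i < n then (if j = i then 1 else 0)
      else (if j < n then - ((int r - 1) * int r ^ j) else 0))"

definition f_r :: "nat \<Rightarrow> nat \<Rightarrow> real poly" where
  "f_r r m = (\<Sum>i<r. monom 1 i) ^ m"

text \<open>\<open>f^<q,l>\<close>: the unique \<open>f^(l)\<close> with \<open>f(z) = \<Sum>_(l<q) z^l f^(l)(z^q)\<close>;
  coefficientwise, \<open>coeff f^(l) k = coeff f (l + q k)\<close>.\<close>
definition section_poly :: "nat \<Rightarrow> nat \<Rightarrow> real poly \<Rightarrow> real poly" where
  "section_poly q l f = (\<Sum>k\<le>degree f. monom (coeff f (l + q * k)) k)"

end

theory Submission
  imports Defs
begin


definition dsn :: "nat \<Rightarrow> nat \<Rightarrow> nat \<Rightarrow> nat" where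
  "dsn r m K = (\<Sum>s<m. K div r^s mod r)"

lemma dsn_Suc: "dsn r (Suc m) K = K mod r + dsn r m (K div r)"
  unfolding dsn_def sum.lessThan_Suc_shift
  by (simp add: div_mult2_eq)

lemma dsn_top: "dsn r (Suc m) K = dsn r m K + K div r^m mod r"
  unfolding dsn_def by simp

lemma legendre:
  "(r - 1) * (\<Sum>s<m. K div r^(Suc s)) + dsn r m K + K div r^m = (K::nat)"
proof (induction m)
  case 0 then show ?case by (simp add: dsn_def)
next
  case (Suc m)
  define Y where "Y = K div r^m"
  have Yd: "K div r^(Suc m) = Y div r" unfolding Y_def power_Suc2 div_mult2_eq by (rule refl)
  have e: "(r - 1) * (Y div r) + Y mod r + Y div r = Y"
  proof (cases "r = 0")
    case True then show ?thesis by simp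
  next
    case False
    then have "(r - 1) * (Y div r) + Y div r = r * (Y div r)"
      by (cases r) simp_all
    then show ?thesis using mult_div_mod_eq[of r Y] by linarith
  qed
  have "(r - 1) * (\<Sum>s<Suc m. K div r^(Suc s)) + dsn r (Suc m) K + K div r^(Suc m)
     = ((r - 1) * (\<Sum>s<m. K div r^(Suc s)) + dsn r m K) + ((r-1) * (Y div r) + Y mod r + Y div r)"
  proof -
    have a: "(\<Sum>s<Suc m. K div r^(Suc s)) = (\<Sum>s<m. K div r^(Suc s)) + Y div r"
      using Yd by simp
    have b: "dsn r (Suc m) K = dsn r m K + Y mod r" unfolding dsn_top Y_def ..
    show ?thesis unfolding a b Yd by (simp only: add_mult_distrib2 add_ac)
  qed
  also have "\<dots> = K" using Suc e unfolding Y_def by simp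
  finally show ?case .
qed

lemma dsn_mod: "dsn r m (K mod r^m) = dsn r m K"
proof (induction m arbitrary: K)
  case 0 then show ?case by (simp add: dsn_def)
next
  case (Suc m)
  have a: "K mod r ^ Suc m mod r = K mod r"
    by (simp add: mod_mod_cancel)
  have b: "K mod r ^ Suc m div r = K div r mod r^m"
    by (cases "r = 0") (auto simp: mod_mult2_eq)
  show ?case unfolding dsn_Suc a b Suc.IH ..
qed

lemma dsn_split: "a < r \<Longrightarrow> dsn r (Suc m) (a + r * b) = a + dsn r m b"
  unfolding dsn_Suc by simp

lemma split_sum:
  fixes g :: "nat \<Rightarrow> 'a::comm_monoid_add"
  assumes "r > 0"
  shows "(\<Sum>x<r*N. g x) = (\<Sum>a<r. \<Sum>b<N. g (a + r*b))"
proof -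
  have inj: "inj_on (\<lambda>(a,b). a + r*b) ({..<r} \<times> {..<N})"
  proof (rule inj_onI, clarsimp)
    fix a b a' b' assume "a < r" "a' < r" "a + r*b = a' + r*b'"
    then have "(a + r*b) mod r = (a' + r*b') mod r" "(a + r*b) div r = (a' + r*b') div r" by auto
    then show "a = a' \<and> b = b'" using \<open>a<r\<close> \<open>a'<r\<close> by auto
  qed
  have im: "(\<lambda>(a,b). a + r*b) ` ({..<r} \<times> {..<N}) = {..<r*N}"
  proof
    show "(\<lambda>(a,b). a + r*b) ` ({..<r} \<times> {..<N}) \<subseteq> {..<r*N}"
    proof clarsimp
      fix a b assume "a < r" "b < N"
      then have "a + r*b < r + r*b" by simp
      also have "\<dots> = r * Suc b" by simp
      also have "\<dots> \<le> r * N" using \<open>b<N\<close> mult_le_mono2[of "Suc b" N r] by simp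
      finally show "a + r*b < r*N" .
    qed
  next
    show "{..<r*N} \<subseteq> (\<lambda>(a,b). a + r*b) ` ({..<r} \<times> {..<N})"
    proof
      fix x assume "x \<in> {..<r*N}"
      then have "x mod r < r" "x div r < N" using assms by (auto simp: less_mult_imp_div_less mult.commute)
      moreover have "x = x mod r + r * (x div r)" by simp
      ultimately show "x \<in> (\<lambda>(a,b). a + r*b) ` ({..<r} \<times> {..<N})" by force
    qed
  qed
  have "(\<Sum>x<r*N. g x) = (\<Sum>p\<in>{..<r} \<times> {..<N}. g (case p of (a,b) \<Rightarrow> a + r*b))"
    using sum.reindex[OF inj, of g] im by (simp add: comp_def)
  also have "\<dots> = (\<Sum>(a,b)\<in>{..<r} \<times> {..<N}. g (a + r*b))"
    by (intro sum.cong refl) (simp split: prod.splits)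
  also have "\<dots> = (\<Sum>a<r. \<Sum>b<N. g (a + r*b))"
    by (simp add: sum.cartesian_product)
  finally show ?thesis .
qed

lemma f_r_expand:
  assumes "r > 0"
  shows "f_r r m = (\<Sum>b<r^m. monom 1 (dsn r m b))"
proof (induction m)
  case 0 then show ?case by (simp add: f_r_def dsn_def)
next
  case (Suc m)
  have "f_r r (Suc m) = (\<Sum>a<r. monom 1 a) * f_r r m" by (simp add: f_r_def)
  also have "\<dots> = (\<Sum>a<r. \<Sum>b<r^m. monom 1 (a + dsn r m b))"
    unfolding Suc sum_distrib_right sum_distrib_left by (simp add: mult_monom) (rule sum.swap)
  also have "\<dots> = (\<Sum>a<r. \<Sum>b<r^m. monom 1 (dsn r (Suc m) (a + r * b)))"
    by (intro sum.cong refl) (simp add: dsn_split)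
  also have "\<dots> = (\<Sum>b<r*r^m. monom 1 (dsn r (Suc m) b))"
    using split_sum[OF assms, of "\<lambda>b. monom 1 (dsn r (Suc m) b)" "r^m"] by (rule sym)
  finally show ?case by simp
qed



lemma coeff_sum_monom:
  "coeff (\<Sum>b\<in>B. monom (1::real) (E b)) D = (\<Sum>b\<in>B. if E b = D then 1 else 0)"
  by (simp add: coeff_sum coeff_monom)

lemma section_expand:
  fixes E :: "nat \<Rightarrow> nat" and B :: "nat set"
  assumes fin: "finite B" and q: "q > 0" and i: "i < q"
  defines "f \<equiv> (\<Sum>b\<in>B. monom (1::real) (E b))"
  shows "section_poly q i f = (\<Sum>b\<in>B. if E b mod q = i then monom 1 (E b div q) else 0)"
proof -
  let ?N = "degree f"
  have deg: "E b \<le> ?N" if "b \<in> B" for b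
  proof (rule le_degree)
    have "(1::real) \<le> (\<Sum>c\<in>B. if E c = E b then 1 else 0)"
      using member_le_sum[OF that, of "\<lambda>c. if E c = E b then (1::real) else 0"] fin by simp
    then show "coeff f (E b) \<noteq> 0" unfolding f_def coeff_sum_monom by linarith
  qed
  have "section_poly q i f = (\<Sum>k\<le>?N. \<Sum>b\<in>B. if E b = i + q * k then monom 1 k else 0)"
    unfolding section_poly_def f_def coeff_sum_monom
    by (intro sum.cong refl) (auto simp: monom_sum intro!: sum.cong)
  also have "\<dots> = (\<Sum>b\<in>B. \<Sum>k\<le>?N. if E b = i + q * k then monom 1 k else 0)"
    by (rule sum.swap)
  also have "\<dots> = (\<Sum>b\<in>B. if E b mod q = i then monom 1 (E b div q) else 0)"
  proof (intro sum.cong refl)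
    fix b assume b: "b \<in> B"
    have iff: "E b = i + q * k \<longleftrightarrow> (E b mod q = i \<and> k = E b div q)" for k
    proof
      assume "E b = i + q * k" then show "E b mod q = i \<and> k = E b div q" using q i by simp
    next
      assume "E b mod q = i \<and> k = E b div q" then show "E b = i + q * k"
        by (metis div_mult_mod_eq add.commute mult.commute)
    qed
    have le: "E b div q \<le> ?N" using deg[OF b] by (meson div_le_dividend le_trans)
    show "(\<Sum>k\<le>?N. if E b = i + q * k then monom 1 k else 0) = (if E b mod q = i then monom 1 (E b div q) else 0)"
      unfolding iff using le by (cases "E b mod q = i") (simp_all add: sum.delta')
  qed
  finally show ?thesis .
qed



lemma num_lemma:
  fixes q l E :: nat
  assumes q: "q > 0" and l: "1 \<le> l" "l < q"
  shows "(E + (q + q - l)) div q = E div q + (if l \<le> E mod q then 1 else 0) + 1"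
proof -
  define d e where "d = E div q" and "e = E mod q"
  have E: "E = e + q * d" unfolding d_def e_def by simp
  have e: "e < q" unfolding e_def using q by simp
  show ?thesis
  proof (cases "l \<le> e")
    case True
    have X: "E + (q + q - l) = (e - l) + q * (d + 2)" using E True l by simp
    have "(E + (q + q - l)) div q = d + 2 + (e - l) div q"
      unfolding X using q by (simp only: div_mult_self2)
    then have "(E + (q + q - l)) div q = d + 2" using e by simp
    then show ?thesis using True unfolding d_def e_def by simp
  next
    case False
    have X: "E + (q + q - l) = (e + q - l) + q * (d + 1)" using E False l by simp
    have "(E + (q + q - l)) div q = d + 1 + (e + q - l) div q"
      unfolding X using q by (simp only: div_mult_self2)
    then have "(E + (q + q - l)) div q = d + 1" using e False by simp
    then show ?thesis using False unfolding d_def e_def by simp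
  qed
qed

lemma Zmul: "[:0, 1:] * monom (1::real) k = monom 1 (Suc k)"
  by (simp add: monom_Suc)

lemma sumF:
  fixes E :: "nat \<Rightarrow> nat" and B :: "nat set"
  assumes fin: "finite B" and q: "q > 0" and I: "finite I" "I \<subseteq> {..<q}"
  shows "(\<Sum>i\<in>I. section_poly q i (\<Sum>b\<in>B. monom (1::real) (E b)))
      = (\<Sum>b\<in>B. if E b mod q \<in> I then monom 1 (E b div q) else 0)"
proof -
  have "(\<Sum>i\<in>I. section_poly q i (\<Sum>b\<in>B. monom (1::real) (E b)))
      = (\<Sum>i\<in>I. \<Sum>b\<in>B. if E b mod q = i then monom 1 (E b div q) else 0)"
    using I by (intro sum.cong refl section_expand[OF fin q]) auto
  also have "\<dots> = (\<Sum>b\<in>B. \<Sum>i\<in>I. if E b mod q = i then monom 1 (E b div q) else 0)"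
    by (rule sum.swap)
  also have "\<dots> = (\<Sum>b\<in>B. if E b mod q \<in> I then monom 1 (E b div q) else 0)"
    using I by (simp add: sum.delta)
  finally show ?thesis .
qed

lemma rhs_eq:
  fixes r m :: nat
  assumes r: "r \<ge> 2"
  shows "(let F = (\<lambda>i. section_poly (r - 1) i (f_r r m)) in
      [:0, 1:] * (\<Sum>i = 0..r - 2. F i)
      + [:0, 1:] * (\<Sum>l = 1..r - 2. (\<Sum>i = 0..l - 1. F i) + [:0, 1:] * (\<Sum>i = l..r - 2. F i)))
    = (\<Sum>a\<in>{1..<r}. \<Sum>b<r^m. monom 1 ((a + dsn r m b + (r - 1) - 1) div (r - 1)))"
proof -
  define q where "q = r - 1"
  define E where "E = dsn r m"
  define B where "B = {..<r^m}"
  have q: "q > 0" using r unfolding q_def by simp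
  have rq: "r - 2 = q - 1" "r = q + 1" unfolding q_def using r by auto
  have finB: "finite B" unfolding B_def by simp
  have f: "f_r r m = (\<Sum>b\<in>B. monom 1 (E b))"
    unfolding B_def E_def using f_r_expand[of r m] r by simp
  have S0: "(\<Sum>i = 0..r - 2. section_poly q i (f_r r m)) = (\<Sum>b\<in>B. monom 1 (E b div q))"
    unfolding f
  proof -
    have "(\<Sum>i = 0..r - 2. section_poly q i (\<Sum>b\<in>B. monom 1 (E b)))
      = (\<Sum>b\<in>B. if E b mod q \<in> {0..r - 2} then monom 1 (E b div q) else 0)"
      by (rule sumF[OF finB q]) (use rq q in auto)
    also have "\<dots> = (\<Sum>b\<in>B. monom 1 (E b div q))"
      using rq q by (intro sum.cong refl) (auto simp: less_Suc_eq_le[symmetric])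
    finally show "(\<Sum>i = 0..r - 2. section_poly q i (\<Sum>b\<in>B. monom 1 (E b))) = (\<Sum>b\<in>B. monom 1 (E b div q))" .
  qed
  have Sl: "(\<Sum>i = 0..l - 1. section_poly q i (f_r r m)) + [:0, 1:] * (\<Sum>i = l..r - 2. section_poly q i (f_r r m))
      = (\<Sum>b\<in>B. monom 1 (E b div q + (if l \<le> E b mod q then 1 else 0)))"
    if l: "l \<in> {1..r - 2}" for l
  proof -
    have A: "(\<Sum>i = 0..l - 1. section_poly q i (f_r r m)) = (\<Sum>b\<in>B. if E b mod q < l then monom 1 (E b div q) else 0)"
      unfolding f
    proof -
      have "(\<Sum>i = 0..l - 1. section_poly q i (\<Sum>b\<in>B. monom 1 (E b)))
        = (\<Sum>b\<in>B. if E b mod q \<in> {0..l - 1} then monom 1 (E b div q) else 0)"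
        by (rule sumF[OF finB q]) (use rq l q in auto)
      also have "\<dots> = (\<Sum>b\<in>B. if E b mod q < l then monom 1 (E b div q) else 0)"
        using l by (intro sum.cong refl) auto
      finally show "(\<Sum>i = 0..l - 1. section_poly q i (\<Sum>b\<in>B. monom 1 (E b))) = (\<Sum>b\<in>B. if E b mod q < l then monom 1 (E b div q) else 0)" .
    qed
    have C: "(\<Sum>i = l..r - 2. section_poly q i (f_r r m)) = (\<Sum>b\<in>B. if l \<le> E b mod q then monom 1 (E b div q) else 0)"
      unfolding f
    proof -
      have "(\<Sum>i = l..r - 2. section_poly q i (\<Sum>b\<in>B. monom 1 (E b)))
        = (\<Sum>b\<in>B. if E b mod q \<in> {l..r - 2} then monom 1 (E b div q) else 0)"
        by (rule sumF[OF finB q]) (use rq l q in auto)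
      also have "\<dots> = (\<Sum>b\<in>B. if l \<le> E b mod q then monom 1 (E b div q) else 0)"
        using l rq q by (intro sum.cong refl) (auto simp: less_Suc_eq_le[symmetric])
      finally show "(\<Sum>i = l..r - 2. section_poly q i (\<Sum>b\<in>B. monom 1 (E b))) = (\<Sum>b\<in>B. if l \<le> E b mod q then monom 1 (E b div q) else 0)" .
    qed
    show ?thesis unfolding A C sum_distrib_left sum.distrib[symmetric]
      by (intro sum.cong refl) (auto simp: Zmul monom_Suc)
  qed
  have lhs_split: "{1..<r} = insert 1 {2..<r}" using r by auto
  have reidx: "(\<Sum>a\<in>{2..<r}. g a) = (\<Sum>l = 1..r - 2. g (r - l))" for g :: "nat \<Rightarrow> real poly"
    by (rule sum.reindex_bij_witness[of _ "\<lambda>a. r - a" "\<lambda>l. r - l"]) (use r in auto)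
  have h1: "(\<Sum>b<r^m. monom (1::real) ((1 + dsn r m b + (r - 1) - 1) div (r - 1))) = (\<Sum>b\<in>B. monom 1 (E b div q + 1))"
    unfolding B_def
  proof (intro sum.cong refl)
    fix b
    have "1 + dsn r m b + (r - 1) - 1 = E b + q * 1" unfolding E_def q_def by simp
    then have "(1 + dsn r m b + (r - 1) - 1) div (r - 1) = 1 + E b div q"
      using q unfolding q_def by (simp only: div_mult_self2)
    then show "monom (1::real) ((1 + dsn r m b + (r - 1) - 1) div (r - 1)) = monom 1 (E b div q + 1)" by simp
  qed
  have h2: "(\<Sum>a\<in>{2..<r}. \<Sum>b<r^m. monom (1::real) ((a + dsn r m b + (r - 1) - 1) div (r - 1)))
     = (\<Sum>l = 1..r - 2. \<Sum>b\<in>B. monom 1 (E b div q + (if l \<le> E b mod q then 1 else 0) + 1))"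
    unfolding reidx B_def
  proof (intro sum.cong refl)
    fix l b assume l: "l \<in> {1..r - 2}"
    have "r - l + E b + q - 1 = E b + (q + q - l)" using l rq by auto
    then show "monom (1::real) ((r - l + dsn r m b + (r - 1) - 1) div (r - 1)) =
         monom (1::real) (E b div q + (if l \<le> E b mod q then 1 else 0) + 1)"
      using num_lemma[OF q, of l "E b"] l rq unfolding E_def q_def by auto
  qed
  have "(\<Sum>a\<in>{1..<r}. \<Sum>b<r^m. monom (1::real) ((a + dsn r m b + (r - 1) - 1) div (r - 1)))
     = (\<Sum>b\<in>B. monom 1 (E b div q + 1))
       + (\<Sum>l = 1..r - 2. \<Sum>b\<in>B. monom 1 (E b div q + (if l \<le> E b mod q then 1 else 0) + 1))"
  proof -
    have ins: "sum g (insert 1 {2..<r}) = g 1 + sum g {2..<r}" for g :: "nat \<Rightarrow> real poly"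
      by (rule sum.insert) auto
    show ?thesis unfolding lhs_split by (subst ins) (simp only: h1 h2)
  qed
  also have "\<dots> = [:0, 1:] * (\<Sum>b\<in>B. monom 1 (E b div q))
      + [:0, 1:] * (\<Sum>l = 1..r - 2. \<Sum>b\<in>B. monom 1 (E b div q + (if l \<le> E b mod q then 1 else 0)))"
    by (simp add: sum_distrib_left Zmul monom_Suc)
  also have "\<dots> = [:0, 1:] * (\<Sum>i = 0..r - 2. section_poly q i (f_r r m))
      + [:0, 1:] * (\<Sum>l = 1..r - 2. (\<Sum>i = 0..l - 1. section_poly q i (f_r r m)) + [:0, 1:] * (\<Sum>i = l..r - 2. section_poly q i (f_r r m)))"
  proof -
    have SS: "(\<Sum>l = 1..r - 2. (\<Sum>i = 0..l - 1. section_poly q i (f_r r m)) + [:0, 1:] * (\<Sum>i = l..r - 2. section_poly q i (f_r r m)))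
       = (\<Sum>l = 1..r - 2. \<Sum>b\<in>B. monom 1 (E b div q + (if l \<le> E b mod q then 1 else 0)))"
      by (intro sum.cong refl) (erule Sl)
    show ?thesis unfolding S0 SS ..
  qed
  finally show ?thesis unfolding q_def Let_def by simp
qed



definition Aset :: "nat \<Rightarrow> nat \<Rightarrow> nat set" where
  "Aset r n = {k. 0 < k \<and> k < r^n \<and> \<not> r dvd k}"

definition Lsum :: "nat \<Rightarrow> nat \<Rightarrow> nat \<Rightarrow> nat" where
  "Lsum r n k = (\<Sum>j<n. (r - 1) * k * r^j div r^n)"

lemma not_dvd_M:
  fixes r k :: nat
  assumes r: "r \<ge> 2" and k: "\<not> r dvd k"
  shows "\<not> r dvd (r - 1) * k"
proof
  assume "r dvd (r - 1) * k"
  moreover have "coprime r (r - 1)" by (rule coprime_diff_one_right_nat) (use r in simp)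
  ultimately have "r dvd k" using coprime_dvd_mult_right_iff by blast
  with k show False by simp
qed

lemma Lsum_legendre:
  assumes r: "r \<ge> 2"
  shows "(r - 1) * Lsum r n k + dsn r n ((r - 1) * k) + (r - 1) * k div r^n = (r - 1) * k"
proof -
  define M where "M = (r - 1) * k"
  have "Lsum r n k = (\<Sum>j<n. M div r^(n - j))"
    unfolding Lsum_def M_def
  proof (intro sum.cong refl)
    fix j assume "j \<in> {..<n}"
    then have "r^n = r^(n-j) * r^j" by (simp add: power_add[symmetric])
    then show "(r - 1) * k * r ^ j div r ^ n = (r - 1) * k div r ^ (n - j)"
      using r by simp
  qed
  also have "\<dots> = (\<Sum>j<n. (\<lambda>s. M div r^(Suc s)) (n - Suc j))"
    by (intro sum.cong refl) (simp add: Suc_diff_Suc)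
  also have "\<dots> = (\<Sum>s<n. M div r^(Suc s))"
    by (rule sum.nat_diff_reindex)
  finally show ?thesis using legendre[where r=r and m=n and K=M] unfolding M_def by simp
qed

lemma height_eq:
  assumes r: "r \<ge> 2" and k: "k \<in> Aset r n"
  shows "Lsum r n k \<le> k"
    and "k - Lsum r n k = (dsn r n ((r - 1) * k mod r^n) + (r - 1) - 1) div (r - 1)"
proof -
  define q where "q = r - 1"
  have q: "q > 0" using r unfolding q_def by simp
  define L D Q where "L = Lsum r n k" and "D = dsn r n (q * k)" and "Q = q * k div r^n"
  have leg: "q * L + D + Q = q * k" using Lsum_legendre[OF r, of n k] unfolding L_def D_def Q_def q_def .
  have Qq: "Q < q"
  proof -
    have "q * k < q * r^n" using k q unfolding Aset_def by simp
    then show ?thesis unfolding Q_def by (rule less_mult_imp_div_less)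
  qed
  have "q * L \<le> q * k" using leg by linarith
  then show Lk: "Lsum r n k \<le> k" using q unfolding L_def by simp
  define h where "h = k - L"
  have hq: "D + Q = q * h" using leg Lk unfolding h_def L_def by (simp add: diff_mult_distrib2)
  have "D + q - 1 = (q - 1 - Q) + q * h" using hq Qq by linarith
  then have "(D + q - 1) div q = h + (q - 1 - Q) div q" using q by (simp only: div_mult_self2)
  also have "\<dots> = h" using q by simp
  finally have "(D + q - 1) div q = h" .
  moreover have "D = dsn r n ((r - 1) * k mod r^n)" unfolding D_def q_def dsn_mod ..
  ultimately show "k - Lsum r n k = (dsn r n ((r - 1) * k mod r^n) + (r - 1) - 1) div (r - 1)"
    unfolding h_def L_def q_def by simp
qed

lemma phi_bij:
  assumes r: "r \<ge> 2" and n: "n \<ge> 1"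
  shows "(\<lambda>k. (r - 1) * k mod r^n) ` Aset r n = Aset r n"
    and "inj_on (\<lambda>k. (r - 1) * k mod r^n) (Aset r n)"
proof -
  have rn: "r dvd r^n" using n by (cases n) simp_all
  have cp: "coprime (r^n) (r - 1)"
  proof -
    have "coprime r (r - 1)" by (rule coprime_diff_one_right_nat) (use r in simp)
    then show ?thesis by simp
  qed
  show inj: "inj_on (\<lambda>k. (r - 1) * k mod r^n) (Aset r n)"
  proof -
    have *: "k' = k" if "k \<in> Aset r n" "k' \<in> Aset r n" "k \<le> k'"
      "(r - 1) * k mod r^n = (r - 1) * k' mod r^n" for k k'
    proof -
      have ge: "(r - 1) * k \<le> (r - 1) * k'" using that(3) by (rule mult_le_mono2)
      have "(r - 1) * k' mod r^n = (r - 1) * k mod r^n" using that(4) by (rule sym)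
      then have "r^n dvd (r - 1) * k' - (r - 1) * k" using mod_eq_dvd_iff_nat[OF ge] by blast
      also have "(r - 1) * k' - (r - 1) * k = (r - 1) * (k' - k)" by (rule diff_mult_distrib2[symmetric])
      finally have "r^n dvd (r - 1) * (k' - k)" .
      then have "r^n dvd k' - k" using coprime_dvd_mult_right_iff[OF cp] by blast
      moreover have "k' < r^n" using that(2) unfolding Aset_def by blast
      then have "k' - k < r^n" by linarith
      ultimately have "k' - k = 0" by (meson nat_dvd_not_less neq0_conv)
      then show ?thesis using that(3) by linarith
    qed
    show ?thesis
    proof (rule inj_onI)
      fix k k' assume a: "k \<in> Aset r n" "k' \<in> Aset r n" "(r - 1) * k mod r^n = (r - 1) * k' mod r^n"
      show "k = k'"
      proof (cases "k \<le> k'")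
        case True show ?thesis using *[OF a(1,2) True a(3)] by (rule sym)
      next
        case False then have "k' \<le> k" by linarith
        then show ?thesis using *[OF a(2,1) _ a(3)[symmetric]] by blast
      qed
    qed
  qed
  have sub: "(\<lambda>k. (r - 1) * k mod r^n) ` Aset r n \<subseteq> Aset r n"
  proof (rule image_subsetI)
    fix k assume k: "k \<in> Aset r n"
    then have kd: "\<not> r dvd k" unfolding Aset_def by blast
    have e: "(r - 1) * k mod r^n mod r = (r - 1) * k mod r" by (rule mod_mod_cancel[OF rn])
    have "\<not> r dvd (r - 1) * k" by (rule not_dvd_M[OF r kd])
    then have "(r - 1) * k mod r \<noteq> 0" by (simp only: dvd_eq_mod_eq_0 not_False_eq_True)
    then have m0: "(r - 1) * k mod r^n mod r \<noteq> 0" unfolding e .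
    then have nd: "\<not> r dvd (r - 1) * k mod r^n" by (simp only: dvd_eq_mod_eq_0 not_False_eq_True)
    have nz: "(r - 1) * k mod r^n \<noteq> 0" using m0 by (metis mod_0)
    have "r^n > 0" using r by simp
    then have lt: "(r - 1) * k mod r^n < r^n" by (rule mod_less_divisor)
    show "(r - 1) * k mod r^n \<in> Aset r n" unfolding Aset_def using nd nz lt by blast
  qed
  have fin: "finite (Aset r n)" by (rule finite_subset[of _ "{..<r^n}"]) (auto simp: Aset_def)
  show "(\<lambda>k. (r - 1) * k mod r^n) ` Aset r n = Aset r n"
    by (rule endo_inj_surj[OF fin sub inj])
qed

lemma Aset_sum:
  fixes h :: "nat \<Rightarrow> 'a::comm_monoid_add"
  assumes r: "r \<ge> 2" and n: "n \<ge> 1"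
  shows "(\<Sum>K\<in>Aset r n. h K) = (\<Sum>a\<in>{1..<r}. \<Sum>b<r^(n-1). h (a + r * b))"
proof -
  have rn: "r^n = r * r^(n-1)" using n by (cases n) simp_all
  have r0: "r > 0" using r by simp
  have A: "Aset r n = {..<r^n} \<inter> {K. 0 < K \<and> \<not> r dvd K}" unfolding Aset_def by blast
  define g where "g K = (if 0 < K \<and> \<not> r dvd K then h K else 0)" for K
  have "(\<Sum>K\<in>Aset r n. h K) = (\<Sum>K<r^n. g K)"
    unfolding A sum.inter_restrict[OF finite_lessThan] g_def mem_Collect_eq ..
  also have "\<dots> = (\<Sum>a<r. \<Sum>b<r^(n-1). g (a + r * b))"
    unfolding rn by (rule split_sum[OF r0])
  also have "\<dots> = (\<Sum>a<r. if a \<noteq> 0 then (\<Sum>b<r^(n-1). h (a + r * b)) else 0)"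
  proof (rule sum.cong[OF refl])
    fix a assume a: "a \<in> {..<r}"
    have iff: "(0 < a + r * b \<and> \<not> r dvd (a + r * b)) \<longleftrightarrow> a \<noteq> 0" for b
    proof -
      have "r dvd (a + r * b) \<longleftrightarrow> r dvd a" by (rule dvd_add_left_iff) simp
      moreover have "r dvd a \<longleftrightarrow> a = 0"
      proof
        assume "r dvd a" then show "a = 0" using a nat_dvd_not_less[of a r] by auto
      qed simp
      ultimately show ?thesis by auto
    qed
    show "(\<Sum>b<r^(n-1). g (a + r * b)) = (if a \<noteq> 0 then (\<Sum>b<r^(n-1). h (a + r * b)) else 0)"
      unfolding g_def iff by simp
  qed
  also have "\<dots> = (\<Sum>a\<in>{1..<r}. \<Sum>b<r^(n-1). h (a + r * b))"
  proof -
    have e: "{..<r} = insert 0 {1..<r}" using r by auto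
    have "(\<Sum>a<r. if a \<noteq> 0 then (\<Sum>b<r^(n-1). h (a + r * b)) else 0)
        = (if (0::nat) \<noteq> 0 then (\<Sum>b<r^(n-1). h (0 + r * b)) else 0)
          + (\<Sum>a\<in>{1..<r}. if a \<noteq> 0 then (\<Sum>b<r^(n-1). h (a + r * b)) else 0)"
      unfolding e by (rule sum.insert) auto
    also have "\<dots> = (\<Sum>a\<in>{1..<r}. \<Sum>b<r^(n-1). h (a + r * b))"
      by (simp only: if_False simp_thms add_0_left) (intro sum.cong refl, simp)
    finally show ?thesis .
  qed
  finally show ?thesis .
qed



definition Pk :: "nat \<Rightarrow> nat \<Rightarrow> nat \<Rightarrow> nat \<Rightarrow> int" where
  "Pk r n k j = (if j < n then - int ((r - 1) * k * r^j div r^n)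
                 else if j = n then int k - int (Lsum r n k) else 0)"

lemma geom_nat: "r \<ge> 1 \<Longrightarrow> (r - 1) * (\<Sum>i<n. r^i) + 1 = (r::nat)^n"
proof (induction n)
  case 0 then show ?case by simp
next
  case (Suc n)
  have "(r - 1) * (\<Sum>i<Suc n. r^i) + 1 = ((r - 1) * (\<Sum>i<n. r^i) + 1) + (r - 1) * r^n"
    by (simp add: algebra_simps)
  also have "\<dots> = r^n + (r - 1) * r^n" using Suc by simp
  also have "\<dots> = r * r^n" using Suc.prems by (simp add: algebra_simps diff_mult_distrib)
  finally show ?case by simp
qed

lemma bv_sum:
  fixes c :: "nat \<Rightarrow> real"
  assumes r: "r \<ge> 1" and j: "j < n"
  shows "(\<Sum>i\<le>n. c i * real_of_int (base_vertices r n i j)) = c j - c n * real ((r - 1) * r^j)"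
proof -
  have "(\<Sum>i\<le>n. c i * real_of_int (base_vertices r n i j))
      = (\<Sum>i<n. c i * real_of_int (base_vertices r n i j)) + c n * real_of_int (base_vertices r n n j)"
    by (simp add: lessThan_Suc_atMost[symmetric])
  also have "(\<Sum>i<n. c i * real_of_int (base_vertices r n i j)) = (\<Sum>i<n. if i = j then c i else 0)"
    by (intro sum.cong refl) (auto simp: base_vertices_def)
  also have "\<dots> = c j" using j by (simp add: sum.delta')
  also have "real_of_int (base_vertices r n n j) = - real ((r - 1) * r^j)"
    using j r by (simp add: base_vertices_def of_nat_diff)
  finally show ?thesis by simp
qed

lemma nondiv:
  assumes r: "r \<ge> 2" and k: "k \<in> Aset r n" and i: "i < n"
  shows "(r - 1) * k * r^i mod r^n \<noteq> 0"
proof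
  assume "(r - 1) * k * r^i mod r^n = 0"
  then have d0: "r^n dvd (r - 1) * k * r^i" by (rule mod_0_imp_dvd)
  have pn: "r^n = r^(n-i) * r^i" using i by (simp flip: power_add)
  have d: "r^(n-i) * r^i dvd ((r - 1) * k) * r^i" using d0 unfolding pn .
  have "r^i > 0" using r by simp
  then have "r^(n-i) dvd (r - 1) * k" using d by (simp add: dvd_mult_cancel2 )
  moreover have "r dvd r^(n-i)" using i by (simp add: dvd_power)
  ultimately have "r dvd (r - 1) * k" by (rule dvd_trans[rotated])
  then show False using not_dvd_M[OF r] k unfolding Aset_def by auto
qed

lemma in_S:
  assumes r: "r \<ge> 2" and k: "k \<in> Aset r n"
  shows "Pk r n k \<in> open_pp_lattice_points n n (base_vertices r n)"
proof -
  define R where "R = real (r^n)"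
  have R: "R > 0" using r unfolding R_def by simp
  define c where "c i = (if i < n then real ((r - 1) * k * r^i mod r^n) / R else real k / R)" for i
  have c01: "0 < c i \<and> c i < 1" if "i \<le> n" for i
  proof (cases "i < n")
    case True
    have "(r - 1) * k * r^i mod r^n < r^n" using r by simp
    then have "real ((r - 1) * k * r^i mod r^n) < R" unfolding R_def by linarith
    moreover have "real ((r - 1) * k * r^i mod r^n) > 0" using nondiv[OF r k True] by simp
    ultimately show ?thesis using True R unfolding c_def by simp
  next
    case False
    have "real k < R" "real k > 0" using k unfolding Aset_def R_def by auto
    then show ?thesis using False R unfolding c_def by simp
  qed
  have coord: "real_of_int (Pk r n k j) = (\<Sum>i\<le>n. c i * real_of_int (base_vertices r n i j))" if j: "j < n" for j
  proof -
    define X where "X = (r - 1) * k * r^j"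
    have e: "r^n * (X div r^n) + X mod r^n = X" by (rule mult_div_mod_eq)
    have "real X = real (r^n * (X div r^n) + X mod r^n)" unfolding e ..
    also have "\<dots> = R * real (X div r^n) + real (X mod r^n)" unfolding R_def by (simp only: of_nat_add of_nat_mult)
    finally have X: "real X = R * real (X div r^n) + real (X mod r^n)" .
    have "(\<Sum>i\<le>n. c i * real_of_int (base_vertices r n i j)) = c j - c n * real ((r - 1) * r^j)"
      using bv_sum[of r j n c] r j by simp
    also have "\<dots> = (real (X mod r^n) - real X) / R"
      unfolding c_def X_def using j R by (simp add: field_simps)
    also have "\<dots> = - real (X div r^n)" using X R by (simp add: field_simps)
    finally show ?thesis unfolding Pk_def X_def using j by simp
  qed
  have height: "real_of_int (Pk r n k n) = (\<Sum>i\<le>n. c i)"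
  proof -
    have L: "Lsum r n k \<le> k" using height_eq(1)[OF r k] .
    have G0: "(\<Sum>i<n. (r - 1) * k * r^i) = k * ((r - 1) * (\<Sum>i<n. r^i))"
      by (simp add: sum_distrib_left mult_ac)
    have G: "(\<Sum>i<n. (r - 1) * k * r^i) + k = k * r^n"
    proof -
      have "(\<Sum>i<n. (r - 1) * k * r^i) + k = k * ((r - 1) * (\<Sum>i<n. r^i) + 1)"
        unfolding G0 by (simp only: add_mult_distrib2 mult_1_right)
      also have "\<dots> = k * r^n" using geom_nat[of r n] r by simp
      finally show ?thesis .
    qed
    have Y: "(\<Sum>i<n. (r - 1) * k * r^i) = r^n * Lsum r n k + (\<Sum>i<n. (r - 1) * k * r^i mod r^n)"
      unfolding Lsum_def sum_distrib_left sum.distrib[symmetric] by simp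
    have Z: "real (\<Sum>i<n. (r - 1) * k * r^i mod r^n) + real k = R * real k - R * real (Lsum r n k)"
    proof -
      have "(\<Sum>i<n. (r - 1) * k * r^i mod r^n) + k + r^n * Lsum r n k = k * r^n" using G Y by linarith
      then have "real ((\<Sum>i<n. (r - 1) * k * r^i mod r^n) + k + r^n * Lsum r n k) = real (k * r^n)"
        by (rule arg_cong)
      then have "real (\<Sum>i<n. (r - 1) * k * r^i mod r^n) + real k + R * real (Lsum r n k) = real k * R"
        unfolding R_def by (simp only: of_nat_add of_nat_mult)
      then have "real (\<Sum>i<n. (r - 1) * k * r^i mod r^n) + real k + R * real (Lsum r n k) = R * real k"
        by (simp only: mult.commute)
      then show ?thesis by linarith
    qed
    have "(\<Sum>i\<le>n. c i) = (\<Sum>i<n. c i) + c n" by (simp add: lessThan_Suc_atMost[symmetric])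
    also have "(\<Sum>i<n. c i) = (\<Sum>i<n. real ((r - 1) * k * r^i mod r^n)) / R"
      unfolding c_def by (simp add: sum_divide_distrib)
    also have "\<dots> + c n = (real (\<Sum>i<n. (r - 1) * k * r^i mod r^n) + real k) / R"
      unfolding c_def by (simp add: add_divide_distrib)
    also have "\<dots> = real k - real (Lsum r n k)" unfolding Z using R by (simp add: field_simps)
    finally show ?thesis unfolding Pk_def using L by simp
  qed
  show ?thesis unfolding open_pp_lattice_points_def
  proof (intro CollectI conjI allI impI exI[of _ c])
    fix j :: nat assume "n < j" then show "Pk r n k j = 0" unfolding Pk_def by simp
  next
    fix i assume "i \<le> n" then show "0 < c i" "c i < 1" using c01 by auto
  next
    fix j assume "j < n" then show "real_of_int (Pk r n k j) = (\<Sum>i\<le>n. c i * real_of_int (base_vertices r n i j))"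
      by (rule coord)
  next
    show "real_of_int (Pk r n k n) = (\<Sum>i\<le>n. c i)" by (rule height)
  qed
qed



lemma S_sub:
  assumes r: "r \<ge> 2" and n: "n \<ge> 1"
    and x: "x \<in> open_pp_lattice_points n n (base_vertices r n)"
  shows "\<exists>k\<in>Aset r n. x = Pk r n k"
proof -
  obtain c :: "nat \<Rightarrow> real" where zero: "\<forall>j>n. x j = 0"
    and c01: "\<forall>i\<le>n. 0 < c i \<and> c i < 1"
    and co: "\<forall>j<n. real_of_int (x j) = (\<Sum>i\<le>n. c i * real_of_int (base_vertices r n i j))"
    and ht: "real_of_int (x n) = (\<Sum>i\<le>n. c i)"
    using x unfolding open_pp_lattice_points_def by blast
  define R where "R = real (r^n)"
  have R: "R > 0" using r unfolding R_def by simp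
  define t where "t = c n"
  have t01: "0 < t" "t < 1" using c01 unfolding t_def by auto
  have xj: "real_of_int (x j) = c j - t * real ((r - 1) * r^j)" if "j < n" for j
    using co that bv_sum[of r j n c] r unfolding t_def by simp
  define kk where "kk = x n - (\<Sum>j<n. x j)"
  have geomR: "1 + (\<Sum>j<n. real ((r - 1) * r^j)) = R"
  proof -
    have "(r - 1) * (\<Sum>i<n. r^i) + 1 = r^n" using geom_nat[of r n] r by simp
    then have "real ((r - 1) * (\<Sum>i<n. r^i) + 1) = R" unfolding R_def by simp
    moreover have "(r - 1) * (\<Sum>i<n. r^i) = (\<Sum>j<n. (r - 1) * r^j)" by (simp add: sum_distrib_left)
    ultimately show ?thesis by (simp add: of_nat_sum sum_distrib_left)
  qed
  have kkR: "real_of_int kk = t * R"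
  proof -
    have "real_of_int kk = real_of_int (x n) - (\<Sum>j<n. real_of_int (x j))"
      unfolding kk_def by simp
    also have "(\<Sum>j<n. real_of_int (x j)) = (\<Sum>j<n. c j - t * real ((r - 1) * r^j))"
      by (intro sum.cong refl) (simp add: xj)
    also have "\<dots> = (\<Sum>j<n. c j) - t * (\<Sum>j<n. real ((r - 1) * r^j))"
      by (simp add: sum_subtractf sum_distrib_left)
    also have "real_of_int (x n) = (\<Sum>j<n. c j) + t"
      unfolding ht t_def by (simp add: lessThan_Suc_atMost[symmetric])
    finally have "real_of_int kk = t * (1 + (\<Sum>j<n. real ((r - 1) * r^j)))"
      by (simp add: algebra_simps)
    then show ?thesis unfolding geomR .
  qed
  have kpos: "kk > 0"
  proof -
    have "t * R > 0" using t01 R by simp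
    then show ?thesis using kkR by linarith
  qed
  have klt: "kk < int (r^n)"
  proof -
    have "t * R < R" using t01 R by simp
    then have "real_of_int kk < real (r^n)" using kkR unfolding R_def by simp
    then show ?thesis by linarith
  qed
  define k where "k = nat kk"
  have kk_k: "kk = int k" unfolding k_def using kpos by simp
  have realk: "real k = t * R" using kkR kk_k by simp
  have k0: "0 < k" "k < r^n" using kpos klt kk_k by auto
  have xj2: "x j = - int ((r - 1) * k * r^j div r^n)"
    and cj: "c j = real ((r - 1) * k * r^j mod r^n) / R" if j: "j < n" for j
  proof -
    define Y where "Y = (r - 1) * k * r^j"
    have "c j = real_of_int (x j) + t * real ((r - 1) * r^j)" using xj[OF j] by simp
    also have "t * real ((r - 1) * r^j) = real Y / R"
      unfolding Y_def using realk R by (simp add: field_simps)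
    finally have cY: "c j = real_of_int (x j) + real Y / R" .
    have "\<lfloor>real Y / R\<rfloor> = - x j"
    proof (rule floor_unique)
      have "0 < c j" "c j < 1" using c01 j by auto
      then show "real_of_int (- x j) \<le> real Y / R" "real Y / R < real_of_int (- x j) + 1"
        using cY by simp_all
    qed
    moreover have "\<lfloor>real Y / R\<rfloor> = int (Y div r^n)"
      unfolding R_def by (rule floor_divide_of_nat_eq)
    ultimately show xjY: "x j = - int ((r - 1) * k * r^j div r^n)" unfolding Y_def by simp
    have e: "r^n * (Y div r^n) + Y mod r^n = Y" by (rule mult_div_mod_eq)
    have "real Y = real (r^n * (Y div r^n) + Y mod r^n)" unfolding e ..
    also have "\<dots> = R * real (Y div r^n) + real (Y mod r^n)" unfolding R_def by (simp only: of_nat_add of_nat_mult)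
    finally have "real Y / R = real (Y div r^n) + real (Y mod r^n) / R" using R by (simp add: field_simps)
    then show "c j = real ((r - 1) * k * r^j mod r^n) / R" using cY xjY unfolding Y_def by simp
  qed
  have ndk: "\<not> r dvd k"
  proof
    assume "r dvd k"
    then obtain m where m: "k = r * m" by blast
    define j where "j = n - 1"
    have j: "j < n" using n unfolding j_def by simp
    have eq: "(r - 1) * k * r^j = ((r - 1) * m) * r^n"
      using n unfolding m j_def by (cases n) (simp_all add: mult_ac)
    have "(r - 1) * k * r^j mod r^n = 0" unfolding eq by (rule mod_mult_self2_is_0)
    then have "c j = 0" using cj[OF j] by simp
    moreover have "0 < c j" using c01 less_imp_le[OF j] by blast
    ultimately show False by simp
  qed
  have kA: "k \<in> Aset r n" unfolding Aset_def using k0 ndk by blast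
  have "x = Pk r n k"
  proof
    fix j
    consider "j < n" | "j = n" | "j > n" by linarith
    then show "x j = Pk r n k j"
    proof cases
      case 1 then show ?thesis using xj2 unfolding Pk_def by simp
    next
      case 2
      have "x n = kk + (\<Sum>j<n. x j)" unfolding kk_def by simp
      also have "(\<Sum>j<n. x j) = (\<Sum>j<n. - int ((r - 1) * k * r^j div r^n))"
        by (intro sum.cong refl) (simp add: xj2)
      also have "\<dots> = - int (Lsum r n k)" unfolding Lsum_def by (simp add: sum_negf)
      finally show ?thesis using 2 kk_k unfolding Pk_def by simp
    next
      case 3 then show ?thesis using zero unfolding Pk_def by simp
    qed
  qed
  then show ?thesis using kA by blast
qed

lemma Pk_recover: "int k = Pk r n k n - (\<Sum>j<n. Pk r n k j)"
proof -
  have "(\<Sum>j<n. Pk r n k j) = (\<Sum>j<n. - int ((r - 1) * k * r^j div r^n))"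
    by (intro sum.cong refl) (simp add: Pk_def)
  also have "\<dots> = - int (Lsum r n k)" unfolding Lsum_def by (simp add: sum_negf)
  finally show ?thesis unfolding Pk_def by simp
qed

lemma Pk_inj: "inj_on (Pk r n) A"
proof (rule inj_onI)
  fix k k' assume "Pk r n k = Pk r n k'"
  then have "int k = int k'" using Pk_recover[of k r n] Pk_recover[of k' r n] by simp
  then show "k = k'" by simp
qed

lemma S_eq:
  assumes r: "r \<ge> 2" and n: "n \<ge> 1"
  shows "open_pp_lattice_points n n (base_vertices r n) = Pk r n ` Aset r n"
  using S_sub[OF r n] in_S[OF r] by blast

theorem main_eq:
  fixes r n :: nat
  assumes r: "r \<ge> 2" and n: "n \<ge> 1"
  shows "local_hstar n n (base_vertices r n) =
    (\<Sum>a\<in>{1..<r}. \<Sum>b<r^(n-1). monom 1 ((a + dsn r (n-1) b + (r - 1) - 1) div (r - 1)))"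
proof -
  define G where "G K = monom (1::real) ((dsn r n K + (r - 1) - 1) div (r - 1))" for K
  define phi where "phi k = (r - 1) * k mod r^n" for k
  have "local_hstar n n (base_vertices r n) = (\<Sum>x\<in>Pk r n ` Aset r n. monom 1 (nat (x n)))"
    unfolding local_hstar_def S_eq[OF r n] ..
  also have "\<dots> = (\<Sum>k\<in>Aset r n. monom 1 (nat (Pk r n k n)))"
    by (subst sum.reindex[OF Pk_inj]) simp
  also have "\<dots> = (\<Sum>k\<in>Aset r n. G (phi k))"
  proof (intro sum.cong refl)
    fix k assume k: "k \<in> Aset r n"
    have "nat (Pk r n k n) = k - Lsum r n k" unfolding Pk_def using height_eq(1)[OF r k] by simp
    then show "monom 1 (nat (Pk r n k n)) = G (phi k)"
      unfolding G_def phi_def height_eq(2)[OF r k] by simp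
  qed
  also have "\<dots> = (\<Sum>K\<in>phi ` Aset r n. G K)"
    using phi_bij(2)[OF r n] unfolding phi_def[abs_def] by (simp add: sum.reindex)
  also have "phi ` Aset r n = Aset r n" using phi_bij(1)[OF r n] unfolding phi_def[abs_def] .
  also have "(\<Sum>K\<in>Aset r n. G K) = (\<Sum>a\<in>{1..<r}. \<Sum>b<r^(n-1). G (a + r * b))"
    by (rule Aset_sum[OF r n])
  also have "\<dots> = (\<Sum>a\<in>{1..<r}. \<Sum>b<r^(n-1). monom 1 ((a + dsn r (n-1) b + (r - 1) - 1) div (r - 1)))"
  proof (intro sum.cong refl)
    fix a b assume a: "a \<in> {1..<r}"
    have "n = Suc (n - 1)" using n by simp
    then have "dsn r n (a + r * b) = a + dsn r (n-1) b" using dsn_split[of a r "n-1" b] a by simp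
    then show "G (a + r * b) = monom 1 ((a + dsn r (n-1) b + (r - 1) - 1) div (r - 1))"
      unfolding G_def by simp
  qed
  finally show ?thesis .
qed


theorem theorem4p2:
  fixes r n :: nat
  assumes "r \<ge> 2" and "n \<ge> 1"
  shows "local_hstar n n (base_vertices r n) =
    (let F = (\<lambda>i. section_poly (r - 1) i (f_r r (n - 1))) in
      [:0, 1:] * (\<Sum>i = 0..r - 2. F i)
      + [:0, 1:] * (\<Sum>l = 1..r - 2. (\<Sum>i = 0..l - 1. F i) + [:0, 1:] * (\<Sum>i = l..r - 2. F i)))"
  by (rule trans[OF main_eq[OF assms] sym[OF rhs_eq[OF assms(1)]]])

end
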